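(* Let $n\ge2$, $g\in H_n\rtimes S_n$ and $i\in I(g)$. Then $g_{[i]}$ lies in the centraliser $C_{H_n\rtimes S_n}(g)$ (in particular $g_{[i]}\in H_n\rtimes S_n$).
   Context: $\mathbb{N}=\{1,2,\dots\}$, $X_n=\{1,\dots,n\}\times\mathbb{N}$, permutations act on the right. $H_n$ is the group of bijections $g$ of $X_n$ with $z_i(g)\in\mathbb{N}$, $t_i(g)\in\mathbb{Z}$ such that $(i,m)g=(i,m+t_i(g))$ for all $m\ge z_i(g)$. $S_n$ acts by $(i,m)\sigma=(i\sigma,m)$; $H_n\rtimes S_n\le\mathrm{Sym}(X_n)$ is generated by $H_n$ and these; each $g$ is uniquely $\omega_g\sigma_g$ with $\omega_g\in H_n$, $\sigma_g\in S_n$, $t_i(g):=t_i(\omega_g)$. $[i]_g$ is the orbit of $i$ under $\langle\sigma_g\rangle$, $t_{[i]}(g)=\sum_{k\in[i]_g}t_k(g)$, $I(g)=\{i:t_{[i]}(g)\ne0\}$. For $i_1\in I(g)$, $m_1\in\mathbb{N}$: $X_{i,m}(g)=\{(i,m')\in X_n: m'\equiv m\bmod|t_{[i]}(g)|\}$ and $X_{[i_1],m_1}(g)=\bigsqcup_{q=1}^{|[i_1]_g|}X_{i_q,m_q}(g)$ with $i_q=i_1\sigma_g^{q-1}$, $m_q=m_1+\sum_{d=1}^{q-1}t_{i_d}(g)$. Sets are almost equal if their symmetric difference is finite. $\sim_g$ is the equivalence relation on $\{[k]_g:k\in I(g)\}$ generated by $[i]_g\sim_g[j]_g$ whenever some $\langle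 g\rangle$-orbit is almost equal to $X_{[i],d}(g)\sqcup X_{[j],e}(g)$ for some $d,e$. $\mathfrak{C}_g([i])=\{k:[k]_g\sim_g[i]_g\}$. $g_{[i]}\in\mathrm{Sym}(X_n)$ is the product of all infinite cycles of $g$ whose support is almost equal to $X_{[j'],d}(g)\sqcup X_{[j''],e}(g)$ for some $j',j''\in\mathfrak{C}_g([i])$ and $d,e\in\mathbb{N}$ (fixing all other points). *)

theory Defs
  imports "HOL-Combinatorics.Permutations"
begin

type_synonym pt = "nat \<times> nat"
type_synonym perm = "pt \<Rightarrow> pt"

text \<open>Permutations of X_n are functions that are
bijective on X_n and the identity outside X_n. Permutations act on the right:
x (f g) = (x f) g, i.e. the product f g is the function g o f.\<close>

definition Xn :: "nat \<Rightarrow> pt set" where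
  "Xn n = {1..n} \<times> {1..}"

definition rmul :: "perm \<Rightarrow> perm \<Rightarrow> perm" where
  "rmul f g = g \<circ> f"

definition Hn :: "nat \<Rightarrow> perm set" where
  "Hn n = {g. bij_betw g (Xn n) (Xn n) \<and> (\<forall>x. x \<notin> Xn n \<longrightarrow> g x = x) \<and>
     (\<forall>i\<in>{1..n}. \<exists>z::nat. \<exists>t::int. \<forall>m\<ge>z.
        fst (g (i, m)) = i \<and> int (snd (g (i, m))) = int m + t)}"

definition sact :: "nat \<Rightarrow> (nat \<Rightarrow> nat) \<Rightarrow> perm" where
  "sact n \<sigma> = (\<lambda>(i, m). if (i, m) \<in> Xn n then (\<sigma> i, m) else (i, m))"

definition HS :: "nat \<Rightarrow> perm set" where
  "HS n = {rmul \<omega> (sact n \<sigma>) | \<omega> \<sigma>. \<omega> \<in> Hn n \<and> \<sigma> permutes {1..n}}"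

definition sig :: "nat \<Rightarrow> perm \<Rightarrow> nat \<Rightarrow> nat" where
  "sig n g = (THE \<sigma>. \<sigma> permutes {1..n} \<and> (\<exists>\<omega>\<in>Hn n. g = rmul \<omega> (sact n \<sigma>)))"

definition omg :: "nat \<Rightarrow> perm \<Rightarrow> perm" where
  "omg n g = (THE \<omega>. \<omega> \<in> Hn n \<and> (\<exists>\<sigma>. \<sigma> permutes {1..n} \<and> g = rmul \<omega> (sact n \<sigma>)))"

definition tH :: "perm \<Rightarrow> nat \<Rightarrow> int" where
  "tH \<omega> i = (THE t. \<exists>z::nat. \<forall>m\<ge>z. fst (\<omega> (i, m)) = i \<and> int (snd (\<omega> (i, m))) = int m + t)"

definition tt :: "nat \<Rightarrow> perm \<Rightarrow> nat \<Rightarrow> int" where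
  "tt n g i = tH (omg n g) i"

definition cls :: "nat \<Rightarrow> perm \<Rightarrow> nat \<Rightarrow> nat set" where
  "cls n g i = {(sig n g ^^ k) i | k. True}"

definition tcls :: "nat \<Rightarrow> perm \<Rightarrow> nat \<Rightarrow> int" where
  "tcls n g i = (\<Sum>k\<in>cls n g i. tt n g k)"

definition Ig :: "nat \<Rightarrow> perm \<Rightarrow> nat set" where
  "Ig n g = {i\<in>{1..n}. tcls n g i \<noteq> 0}"

text \<open>X_{i,m}(g) (m may be any integer here, since the m_q are integers)\<close>
definition Xim :: "nat \<Rightarrow> perm \<Rightarrow> nat \<Rightarrow> int \<Rightarrow> pt set" where
  "Xim n g i m = {(i', m') \<in> Xn n. i' = i \<and> int m' mod \<bar>tcls n g i\<bar> = m mod \<bar>tcls n g i\<bar>}"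

text \<open>X_{[i1],m1}(g); q is 0-indexed here: i_q = i1 sigma^q, m_q = m1 + sum_{d<q} t_{i1 sigma^d}\<close>
definition Xcls :: "nat \<Rightarrow> perm \<Rightarrow> nat \<Rightarrow> nat \<Rightarrow> pt set" where
  "Xcls n g i1 m1 = (\<Union>q\<in>{0..<card (cls n g i1)}.
      Xim n g ((sig n g ^^ q) i1) (int m1 + (\<Sum>d<q. tt n g ((sig n g ^^ d) i1))))"

definition almost_eq :: "'a set \<Rightarrow> 'a set \<Rightarrow> bool" where
  "almost_eq A B \<longleftrightarrow> finite ((A - B) \<union> (B - A))"

definition gorb :: "perm \<Rightarrow> pt \<Rightarrow> pt set" where
  "gorb g x = {y. \<exists>k. (g ^^ k) x = y \<or> (g ^^ k) y = x}"

definition splits :: "nat \<Rightarrow> perm \<Rightarrow> pt set \<Rightarrow> nat \<Rightarrow> nat \<Rightarrow> bool" where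
  "splits n g Orb j j' \<longleftrightarrow> (\<exists>d e. d \<ge> 1 \<and> e \<ge> 1 \<and> Xcls n g j d \<inter> Xcls n g j' e = {} \<and>
      almost_eq Orb (Xcls n g j d \<union> Xcls n g j' e))"

definition simbase :: "nat \<Rightarrow> perm \<Rightarrow> (nat set \<times> nat set) set" where
  "simbase n g = {(cls n g i, cls n g j) | i j. i \<in> Ig n g \<and> j \<in> Ig n g \<and>
      (\<exists>x\<in>Xn n. splits n g (gorb g x) i j)}"

definition simg :: "nat \<Rightarrow> perm \<Rightarrow> (nat set \<times> nat set) set" where
  "simg n g = Id_on {cls n g k | k. k \<in> Ig n g} \<union> (simbase n g \<union> (simbase n g)\<inverse>)\<^sup>+"

definition Cg :: "nat \<Rightarrow> perm \<Rightarrow> nat \<Rightarrow> nat set" where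
  "Cg n g i = {k \<in> Ig n g. (cls n g k, cls n g i) \<in> simg n g}"

text \<open>g_[i]: product of the infinite cycles of g whose support is almost equal to
X_{[j'],d} disjoint-union X_{[j''],e} with j', j'' in C_g([i]).\<close>
definition gpart :: "nat \<Rightarrow> perm \<Rightarrow> nat \<Rightarrow> perm" where
  "gpart n g i = (\<lambda>x. if x \<in> Xn n \<and> infinite (gorb g x) \<and>
       (\<exists>j\<in>Cg n g i. \<exists>j'\<in>Cg n g i. splits n g (gorb g x) j j') then g x else x)"

end

theory Submission
  imports Defs "HOL-Combinatorics.Orbits"
begin


lemma sact_in: "\<sigma> permutes {1..n} \<Longrightarrow> x \<in> Xn n \<Longrightarrow> sact n \<sigma> x = (\<sigma> (fst x), snd x)"
  by (cases x) (auto simp: sact_def)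
lemma sact_out: "x \<notin> Xn n \<Longrightarrow> sact n \<sigma> x = x"
  by (cases x) (auto simp: sact_def)

lemma Xn_iff: "(a,b) \<in> Xn n \<longleftrightarrow> a \<in> {1..n} \<and> b \<ge> 1"
  by (auto simp: Xn_def)

lemma sact_inj: assumes "\<sigma> permutes {1..n}" shows "inj (sact n \<sigma>)"
proof (rule injI)
  fix x y assume e: "sact n \<sigma> x = sact n \<sigma> y"
  obtain a b where x: "x = (a,b)" by (cases x)
  obtain c d where y: "y = (c,d)" by (cases y)
  have pin: "\<And>i. i \<in> {1..n} \<longleftrightarrow> \<sigma> i \<in> {1..n}" using permutes_in_image[OF assms] by blast
  show "x = y"
    using e pin[of a] pin[of c] permutes_inj[OF assms] unfolding x y sact_def
    by (auto simp: Xn_iff split: if_splits dest: injD)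
qed

lemma Hn_shift:
  assumes "\<omega> \<in> Hn n" "r \<in> {1..n}"
  shows "\<exists>z. \<forall>m\<ge>z. fst (\<omega> (r, m)) = r \<and> int (snd (\<omega> (r, m))) = int m + tH \<omega> r"
proof -
  obtain z t where zt: "\<forall>m\<ge>z. fst (\<omega> (r, m)) = r \<and> int (snd (\<omega> (r, m))) = int m + t"
    using assms unfolding Hn_def by blast
  have "tH \<omega> r = t"
    unfolding tH_def
  proof (rule the_equality)
    show "\<exists>z. \<forall>m\<ge>z. fst (\<omega> (r, m)) = r \<and> int (snd (\<omega> (r, m))) = int m + t" using zt by blast
  next
    fix t' assume "\<exists>z. \<forall>m\<ge>z. fst (\<omega> (r, m)) = r \<and> int (snd (\<omega> (r, m))) = int m + t'"
    then obtain z' where "\<forall>m\<ge>z'. fst (\<omega> (r, m)) = r \<and> int (snd (\<omega> (r, m))) = int m + t'" by blast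
    with zt have "int (max z z') + t' = int (max z z') + t" by (metis max.cobounded1 max.cobounded2)
    then show "t' = t" by simp
  qed
  with zt show ?thesis by blast
qed

lemma decomp_unique:
  assumes w1: "\<omega>1 \<in> Hn n" and w2: "\<omega>2 \<in> Hn n" and s1: "\<sigma>1 permutes {1..n}" and s2: "\<sigma>2 permutes {1..n}"
    and e: "rmul \<omega>1 (sact n \<sigma>1) = rmul \<omega>2 (sact n \<sigma>2)"
  shows "\<sigma>1 = \<sigma>2 \<and> \<omega>1 = \<omega>2"
proof -
  have ss: "\<sigma>1 = \<sigma>2"
  proof
    fix r show "\<sigma>1 r = \<sigma>2 r"
    proof (cases "r \<in> {1..n}")
      case False then show ?thesis using s1 s2 by (simp add: permutes_not_in)
    next
      case True
      obtain z1 where z1: "\<forall>m\<ge>z1. fst (\<omega>1 (r, m)) = r \<and> int (snd (\<omega>1 (r, m))) = int m + tH \<omega>1 r"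
        using Hn_shift[OF w1 True] by blast
      obtain z2 where z2: "\<forall>m\<ge>z2. fst (\<omega>2 (r, m)) = r \<and> int (snd (\<omega>2 (r, m))) = int m + tH \<omega>2 r"
        using Hn_shift[OF w2 True] by blast
      define m where "m = max z1 z2 + 1"
      have inX: "(r,m) \<in> Xn n" using True by (simp add: Xn_iff m_def)
      have b1: "\<omega>1 (r,m) \<in> Xn n" using w1 inX unfolding Hn_def bij_betw_def by auto
      have b2: "\<omega>2 (r,m) \<in> Xn n" using w2 inX unfolding Hn_def bij_betw_def by auto
      have "sact n \<sigma>1 (\<omega>1 (r,m)) = sact n \<sigma>2 (\<omega>2 (r,m))" using e by (metis comp_apply rmul_def)
      then have "\<sigma>1 (fst (\<omega>1 (r,m))) = \<sigma>2 (fst (\<omega>2 (r,m)))"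
        using sact_in[OF s1 b1] sact_in[OF s2 b2] by simp
      moreover have "fst (\<omega>1 (r,m)) = r" "fst (\<omega>2 (r,m)) = r" using z1 z2 by (auto simp: m_def)
      ultimately show ?thesis by simp
    qed
  qed
  moreover have "\<omega>1 = \<omega>2"
  proof
    fix x have "sact n \<sigma>2 (\<omega>1 x) = sact n \<sigma>2 (\<omega>2 x)" using e ss by (metis comp_apply rmul_def)
    then show "\<omega>1 x = \<omega>2 x" using sact_inj[OF s2] by (simp add: inj_eq)
  qed
  ultimately show ?thesis by simp
qed

lemma HS_decomp:
  assumes "g \<in> HS n"
  shows "sig n g permutes {1..n}" "omg n g \<in> Hn n" "g = rmul (omg n g) (sact n (sig n g))"
proof -
  obtain \<omega> \<sigma> where ws: "g = rmul \<omega> (sact n \<sigma>)" "\<omega> \<in> Hn n" "\<sigma> permutes {1..n}"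
    using assms unfolding HS_def by blast
  have "sig n g = \<sigma>" unfolding sig_def
    by (rule the_equality) (use ws decomp_unique in blast)+
  moreover have "omg n g = \<omega>" unfolding omg_def
    by (rule the_equality) (use ws decomp_unique in blast)+
  ultimately show "sig n g permutes {1..n}" "omg n g \<in> Hn n" "g = rmul (omg n g) (sact n (sig n g))"
    using ws by auto
qed



lemma sact_comp: assumes "\<sigma> permutes {1..n}" "\<tau> permutes {1..n}"
  shows "sact n \<sigma> (sact n \<tau> x) = sact n (\<sigma> \<circ> \<tau>) x"
proof (cases "x \<in> Xn n")
  case True
  obtain a b where x: "x = (a,b)" by (cases x)
  have "\<tau> a \<in> {1..n}" using True assms(2) permutes_in_image[OF assms(2)] by (auto simp: x Xn_iff)
  then show ?thesis using True by (auto simp: x sact_def Xn_iff)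
next
  case False then show ?thesis by (simp add: sact_out)
qed

lemma sact_id: "sact n id x = x" by (cases x) (auto simp: sact_def)

lemma perm_in: "\<sigma> permutes {1..n} \<Longrightarrow> i \<in> {1..n} \<Longrightarrow> \<sigma> i \<in> {1..n}"
  by (metis permutes_in_image)

lemma sact_map: assumes "\<sigma> permutes {1..n}" "x \<in> Xn n" shows "sact n \<sigma> x \<in> Xn n"
proof -
  obtain a b where x: "x = (a,b)" by (cases x)
  have "a \<in> {1..n}" "b \<ge> 1" using assms(2) by (auto simp only: x Xn_iff)
  then have "\<sigma> a \<in> {1..n}" using perm_in[OF assms(1)] by blast
  then show ?thesis using sact_in[OF assms] \<open>b \<ge> 1\<close> by (simp add: x Xn_iff)
qed

lemma sact_Xn: assumes "\<sigma> permutes {1..n}" shows "bij_betw (sact n \<sigma>) (Xn n) (Xn n)"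
proof -
  have inv: "inv \<sigma> permutes {1..n}" using assms by (rule permutes_inv)
  have ii: "\<sigma> \<circ> inv \<sigma> = id" using permutes_inverses(1)[OF assms] by (simp add: fun_eq_iff)
  have e: "\<And>x. sact n \<sigma> (sact n (inv \<sigma>) x) = x"
    by (simp add: sact_comp[OF assms inv] ii sact_id)
  show ?thesis unfolding bij_betw_def
  proof
    show "inj_on (sact n \<sigma>) (Xn n)" using sact_inj[OF assms] by (metis inj_on_subset subset_UNIV)
    show "sact n \<sigma> ` Xn n = Xn n"
    proof
      show "sact n \<sigma> ` Xn n \<subseteq> Xn n" using sact_map[OF assms] by blast
      show "Xn n \<subseteq> sact n \<sigma> ` Xn n"
      proof
        fix x assume "x \<in> Xn n"
        then have "sact n (inv \<sigma>) x \<in> Xn n" by (rule sact_map[OF inv])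
        then show "x \<in> sact n \<sigma> ` Xn n" using e[of x] by (metis imageI)
      qed
    qed
  qed
qed

lemma Hn_bij: assumes "\<omega> \<in> Hn n" shows "bij \<omega>"
proof -
  have b: "bij_betw \<omega> (Xn n) (Xn n)" and o: "\<And>x. x \<notin> Xn n \<Longrightarrow> \<omega> x = x"
    using assms unfolding Hn_def by auto
  have "bij_betw \<omega> (Xn n \<union> (- Xn n)) (Xn n \<union> (- Xn n))"
  proof (rule bij_betw_combine[OF b])
    have "bij_betw id (- Xn n) (- Xn n)" by (rule bij_betw_id)
    then show "bij_betw \<omega> (- Xn n) (- Xn n)" using o by (subst bij_betw_cong[where g=id]) auto
    show "Xn n \<inter> - Xn n = {}" by auto
  qed
  then show ?thesis by simp
qed

locale hsg =
  fixes n :: nat and g :: perm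
  assumes HS: "g \<in> HS n"
begin

abbreviation "sg \<equiv> sig n g"
abbreviation "t \<equiv> tt n g"

lemma sg_perm: "sg permutes {1..n}" using HS_decomp[OF HS] by simp

lemma sg_in: "r \<in> {1..n} \<Longrightarrow> sg r \<in> {1..n}" using permutes_in_image[OF sg_perm] by blast
lemma sgpow_in: "r \<in> {1..n} \<Longrightarrow> (sg ^^ k) r \<in> {1..n}"
proof (induct k)
  case (Suc k) then show ?case using sg_in[of "(sg ^^ k) r"] by (simp only: funpow.simps comp_apply)
qed simp

lemma g_eq: "g x = sact n sg (omg n g x)"
  using HS_decomp[OF HS] by (metis comp_apply rmul_def)

lemma g_out: assumes "x \<notin> Xn n" shows "g x = x"
proof -
  have "omg n g x = x" using HS_decomp(2)[OF HS] assms unfolding Hn_def by blast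
  then show ?thesis using g_eq[of x] sact_out[OF assms] by simp
qed

lemma g_bij_Xn: "bij_betw g (Xn n) (Xn n)"
proof -
  have "bij_betw (sact n sg \<circ> omg n g) (Xn n) (Xn n)"
    using HS_decomp(2)[OF HS] sact_Xn[OF sg_perm] unfolding Hn_def by (auto intro: bij_betw_trans)
  moreover have "sact n sg \<circ> omg n g = g" using g_eq by auto
  ultimately show ?thesis by simp
qed

lemma g_bij: "bij g"
proof -
  have "bij_betw g (Xn n \<union> (- Xn n)) (Xn n \<union> (- Xn n))"
  proof (rule bij_betw_combine[OF g_bij_Xn])
    have "bij_betw id (- Xn n) (- Xn n)" by (rule bij_betw_id)
    then show "bij_betw g (- Xn n) (- Xn n)" using g_out by (subst bij_betw_cong[where g=id]) auto
    show "Xn n \<inter> - Xn n = {}" by auto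
  qed
  then show ?thesis by simp
qed

lemma g_inj: "inj g" using g_bij bij_is_inj by auto

lemma g_Xn_iff: "g x \<in> Xn n \<longleftrightarrow> x \<in> Xn n"
proof (cases "x \<in> Xn n")
  case True then show ?thesis using bij_betw_apply[OF g_bij_Xn] by blast
next
  case False then show ?thesis using g_out[OF False] by simp
qed

lemma gpow_Xn_iff: "(g ^^ k) x \<in> Xn n \<longleftrightarrow> x \<in> Xn n"
  by (induct k) (auto simp: g_Xn_iff)

lemma gpow_inj: "inj (g ^^ k)" using g_inj by simp
lemma gpow_bij: "bij (g ^^ k)" using g_bij by simp

lemma shift_ex: "\<exists>Z\<ge>1. \<forall>r\<in>{1..n}. \<forall>m\<ge>Z. g (r,m) = (sg r, nat (int m + t r)) \<and> int m + t r \<ge> 1"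
proof -
  have w: "omg n g \<in> Hn n" using HS_decomp[OF HS] by simp
  have "\<forall>r\<in>{1..n}. \<exists>z. \<forall>m\<ge>z. fst (omg n g (r, m)) = r \<and> int (snd (omg n g (r, m))) = int m + t r"
    using Hn_shift[OF w] unfolding tt_def by blast
  then obtain zf where zf: "\<And>r m. r \<in> {1..n} \<Longrightarrow> m \<ge> zf r \<Longrightarrow> fst (omg n g (r, m)) = r \<and> int (snd (omg n g (r, m))) = int m + t r"
    by metis
  define Z where "Z = Suc (\<Sum>r\<in>{1..n}. zf r)"
  have "\<forall>r\<in>{1..n}. \<forall>m\<ge>Z. g (r,m) = (sg r, nat (int m + t r)) \<and> int m + t r \<ge> 1"
  proof (intro ballI allI impI)
    fix r m assume r: "r \<in> {1..n}" and m: "Z \<le> m"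
    have "zf r \<le> (\<Sum>r\<in>{1..n}. zf r)" using r by (intro member_le_sum) auto
    then have "m \<ge> zf r" using m by (simp add: Z_def)
    from zf[OF r this] obtain m' where om: "omg n g (r,m) = (r, m')" "int m' = int m + t r"
      by (metis prod.collapse)
    have "(r,m) \<in> Xn n" using r m by (simp add: Xn_iff Z_def)
    moreover have "bij_betw (omg n g) (Xn n) (Xn n)" using w by (simp add: Hn_def)
    ultimately have "omg n g (r,m) \<in> Xn n" using bij_betw_apply by metis
    then have "(r,m') \<in> Xn n" using om by simp
    then have "m' \<ge> 1" by (simp add: Xn_iff)
    then show "g (r,m) = (sg r, nat (int m + t r)) \<and> int m + t r \<ge> 1"
      using g_eq[of "(r,m)"] om sact_in[OF sg_perm \<open>(r,m') \<in> Xn n\<close>] by simp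
  qed
  then show ?thesis unfolding Z_def by (intro exI[of _ "Suc (\<Sum>r\<in>{1..n}. zf r)"]) auto
qed

end


context hsg begin

abbreviation "L r \<equiv> card (cls n g r)"

definition PS :: "nat \<Rightarrow> nat \<Rightarrow> int" where
  "PS r k = (\<Sum>d<k. t ((sg ^^ d) r))"

lemma perm_sg: "permutation sg"
  using permutes_imp_permutation[OF _ sg_perm] by simp

lemma cls_orbit: "cls n g r = orbit sg r"
  unfolding cls_def orbit_altdef_permutation[OF perm_sg] by simp

lemma self_orbit: "r \<in> orbit sg r" using permutation_self_in_orbit[OF perm_sg] .

lemma cls_img: "cls n g r = (\<lambda>k. (sg ^^ k) r) ` {..<funpow_dist1 sg r r}"
  unfolding cls_orbit using orbit_conv_funpow_dist1[OF self_orbit] by (simp add: atLeast0LessThan)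

lemma inj_pow: "inj_on (\<lambda>k. (sg ^^ k) r) {..<funpow_dist1 sg r r}"
  using inj_on_funpow_dist1[OF self_orbit] by (simp add: atLeast0LessThan)

lemma L_eq: "L r = funpow_dist1 sg r r"
  unfolding cls_img using card_image[OF inj_pow] by simp

lemma cls_img2: "cls n g r = (\<lambda>k. (sg ^^ k) r) ` {..<L r}"
  using cls_img L_eq by simp

lemma inj_pow2: "inj_on (\<lambda>k. (sg ^^ k) r) {..<L r}"
  using inj_pow L_eq by simp

lemma L_pos: "L r > 0" using L_eq by simp

lemma powL: "(sg ^^ L r) r = r"
  using funpow_dist1_prop[OF self_orbit] L_eq by simp

lemma self_cls: "r \<in> cls n g r" unfolding cls_orbit by (rule self_orbit)

lemma pow_cls: "(sg ^^ k) r \<in> cls n g r" unfolding cls_def by blast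

lemma cls_same: assumes "s \<in> cls n g r" shows "cls n g s = cls n g r"
proof -
  have s: "s \<in> orbit sg r" using assms cls_orbit by simp
  have r: "r \<in> orbit sg s" using orbit_swap[OF self_orbit s] .
  show ?thesis unfolding cls_orbit
    using orbit_trans[OF _ s] orbit_trans[OF _ r] by blast
qed

lemma cls_sub: assumes "r \<in> {1..n}" shows "cls n g r \<subseteq> {1..n}"
  unfolding cls_def using sgpow_in[OF assms] by blast

lemma L_le: assumes "r \<in> {1..n}" shows "L r \<le> n"
  using card_mono[OF _ cls_sub[OF assms]] by simp

lemma pow_mod: "(sg ^^ k) r = (sg ^^ (k mod L r)) r"
  by (metis funpow_mod_eq powL)

lemma pow_multL: "(sg ^^ (p * L r)) r = r"
  using pow_mod[of "p * L r" r] by simp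

lemma L_same: "s \<in> cls n g r \<Longrightarrow> L s = L r" using cls_same by simp

lemma tcls_same: "s \<in> cls n g r \<Longrightarrow> tcls n g s = tcls n g r"
  unfolding tcls_def using cls_same by simp

lemma tcls_PS: "tcls n g r = PS r (L r)"
  unfolding tcls_def PS_def
  by (subst cls_img2) (simp add: sum.reindex[OF inj_pow2])

lemma PS_Suc: "PS r (Suc k) = PS r k + t ((sg ^^ k) r)"
  unfolding PS_def by simp

lemma PS_add: "PS r (a + b) = PS r a + PS ((sg ^^ a) r) b"
proof (induct b)
  case 0 then show ?case by (simp add: PS_def)
next
  case (Suc b)
  have "PS r (a + Suc b) = PS r (a + b) + t ((sg ^^ (a + b)) r)" by (simp add: PS_Suc)
  also have "(sg ^^ (a + b)) r = (sg ^^ b) ((sg ^^ a) r)" by (metis funpow_add add.commute comp_apply)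
  finally show ?case using Suc by (simp add: PS_Suc)
qed


lemma PS_period: "PS r (p * L r + q) = int p * tcls n g r + PS r q"
proof (induct p)
  case 0 then show ?case by simp
next
  case (Suc p)
  have "PS r (Suc p * L r + q) = PS r (L r + (p * L r + q))" by (simp add: add.assoc)
  also have "\<dots> = tcls n g r + PS r (p * L r + q)"
    by (simp add: PS_add powL tcls_PS)
  finally show ?case using Suc by (simp add: algebra_simps)
qed

lemma PS_divmod: "PS r k = int (k div L r) * tcls n g r + PS r (k mod L r)"
  using PS_period[where p="k div L r" and r=r and q="k mod L r"] by simp

definition M :: int where "M = (\<Sum>k\<in>{1..n}. \<bar>t k\<bar>)"
definition B :: int where "B = int n * M"

lemma M_ge: "k \<in> {1..n} \<Longrightarrow> \<bar>t k\<bar> \<le> M"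
  unfolding M_def by (rule member_le_sum) auto

lemma M_nonneg: "M \<ge> 0" unfolding M_def by (simp add: sum_nonneg)
lemma B_nonneg: "B \<ge> 0" unfolding B_def using M_nonneg by simp

lemma PS_abs: assumes "r \<in> {1..n}" shows "\<bar>PS r k\<bar> \<le> int k * M"
proof (induct k)
  case 0 then show ?case by (simp add: PS_def)
next
  case (Suc k)
  have "\<bar>t ((sg ^^ k) r)\<bar> \<le> M" using M_ge sgpow_in[OF assms] by blast
  then show ?case using Suc by (simp add: PS_Suc algebra_simps abs_triangle_ineq[THEN order_trans])
qed

lemma PS_small: assumes "r \<in> {1..n}" "q < L r" shows "\<bar>PS r q\<bar> \<le> B"
proof -
  have "int q \<le> int n" using assms L_le[OF assms(1)] by simp
  then have "int q * M \<le> int n * M" using M_nonneg by (simp add: mult_right_mono)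
  then show ?thesis using PS_abs[OF assms(1), of q] unfolding B_def by simp
qed

lemma PS_lower: assumes "r \<in> {1..n}" "tcls n g r \<ge> 0" shows "PS r k \<ge> - B"
proof -
  have "\<bar>PS r (k mod L r)\<bar> \<le> B" using PS_small[OF assms(1)] L_pos by simp
  moreover have "int (k div L r) * tcls n g r \<ge> 0" using assms(2) by simp
  ultimately show ?thesis using PS_divmod[of r k] by linarith
qed

lemma PS_upper: assumes "r \<in> {1..n}" "tcls n g r \<le> 0" shows "PS r k \<le> B"
proof -
  have "\<bar>PS r (k mod L r)\<bar> \<le> B" using PS_small[OF assms(1)] L_pos by simp
  moreover have "int (k div L r) * tcls n g r \<le> 0" using assms(2) by (simp add: mult_nonneg_nonpos)
  ultimately show ?thesis using PS_divmod[of r k] by linarith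
qed

lemma PS_mod: "PS r k mod \<bar>tcls n g r\<bar> = PS r (k mod L r) mod \<bar>tcls n g r\<bar>"
proof -
  have "int (k div L r) * tcls n g r mod \<bar>tcls n g r\<bar> = 0"
    by (simp add: abs_if)
  then show ?thesis using PS_divmod[of r k] by (metis mod_add_left_eq add.left_neutral)
qed

end


locale hsg2 = hsg +
  fixes Z :: nat
  assumes Z1: "Z \<ge> 1"
    and Zsh: "\<And>r m. r \<in> {1..n} \<Longrightarrow> m \<ge> Z \<Longrightarrow> g (r,m) = (sg r, nat (int m + t r)) \<and> int m + t r \<ge> 1"
begin

definition Fw :: "pt \<Rightarrow> pt set" where "Fw x = {(g ^^ j) x | j. True}"
definition Bw :: "pt \<Rightarrow> pt set" where "Bw x = {y. \<exists>j. (g ^^ j) y = x}"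

lemma gorb_split: "gorb g x = Fw x \<union> Bw x"
  unfolding gorb_def Fw_def Bw_def by blast

lemma Gstep:
  assumes s: "s \<in> {1..n}" and ge: "int m + PS s k \<ge> int Z"
    and eq: "(g ^^ k) (s,m) = ((sg ^^ k) s, nat (int m + PS s k))"
  shows "(g ^^ Suc k) (s,m) = ((sg ^^ Suc k) s, nat (int m + PS s (Suc k))) \<and> int m + PS s (Suc k) \<ge> 1"
proof -
  define r' where "r' = (sg ^^ k) s"
  define m' where "m' = nat (int m + PS s k)"
  have r': "r' \<in> {1..n}" using sgpow_in[OF s] r'_def by simp
  have im': "int m' = int m + PS s k" using ge Z1 m'_def by simp
  have "m' \<ge> Z" using ge im' by simp
  from Zsh[OF r' this] have z: "g (r', m') = (sg r', nat (int m' + t r')) \<and> int m' + t r' \<ge> 1" .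
  have "(g ^^ Suc k) (s,m) = g (r', m')" using eq r'_def m'_def by simp
  moreover have "PS s (Suc k) = PS s k + t r'" using PS_Suc r'_def by simp
  moreover have "sg r' = (sg ^^ Suc k) s" using r'_def by simp
  ultimately show ?thesis using z im' by simp
qed

lemma G2:
  assumes s: "s \<in> {1..n}" and m: "m \<ge> 1" and h: "\<forall>i<k. int m + PS s i \<ge> int Z"
  shows "(g ^^ k) (s,m) = ((sg ^^ k) s, nat (int m + PS s k)) \<and> int m + PS s k \<ge> 1"
  using h
proof (induct k)
  case 0 then show ?case using m by (simp add: PS_def)
next
  case (Suc k)
  then have "(g ^^ k) (s,m) = ((sg ^^ k) s, nat (int m + PS s k))" by simp
  moreover have "int m + PS s k \<ge> int Z" using Suc.prems by simp
  ultimately show ?case using Gstep[OF s] by blast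
qed

lemma G:
  assumes s: "s \<in> {1..n}" and m: "m \<ge> 1" and h: "\<forall>i<k. snd ((g ^^ i) (s,m)) \<ge> Z"
  shows "(g ^^ k) (s,m) = ((sg ^^ k) s, nat (int m + PS s k)) \<and> int m + PS s k \<ge> 1"
  using h
proof (induct k)
  case 0 then show ?case using m by (simp add: PS_def)
next
  case (Suc k)
  then have e: "(g ^^ k) (s,m) = ((sg ^^ k) s, nat (int m + PS s k))" and p: "int m + PS s k \<ge> 1" by simp_all
  have "snd ((g ^^ k) (s,m)) \<ge> Z" using Suc.prems by simp
  then have "int m + PS s k \<ge> int Z" using e p by simp
  then show ?case using Gstep[OF s _ e] by blast
qed

lemma Xcls_char:
  assumes r: "r \<in> {1..n}"
  shows "(a,b) \<in> Xcls n g r e \<longleftrightarrow> a \<in> {1..n} \<and> b \<ge> 1 \<and>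
    (\<exists>q<L r. a = (sg ^^ q) r \<and> int b mod \<bar>tcls n g r\<bar> = (int e + PS r q) mod \<bar>tcls n g r\<bar>)"
proof -
  have ts: "\<And>q. tcls n g ((sg ^^ q) r) = tcls n g r" using tcls_same[OF pow_cls] by simp
  show ?thesis
    unfolding Xcls_def Xim_def PS_def[symmetric]
    using ts sgpow_in[OF r] by (auto simp: Xn_iff)
qed

lemma Xcls_row: "(a,b) \<in> Xcls n g r e \<Longrightarrow> a \<in> cls n g r"
  unfolding Xcls_def Xim_def using pow_cls by auto

lemma Xcls_intro:
  assumes r: "r \<in> {1..n}" and a: "a = (sg ^^ k) r" and b: "b \<ge> 1"
    and md: "int b mod \<bar>tcls n g r\<bar> = (int e + PS r k) mod \<bar>tcls n g r\<bar>"
  shows "(a,b) \<in> Xcls n g r e"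
proof -
  have "a = (sg ^^ (k mod L r)) r" using a pow_mod by simp
  moreover have "(int e + PS r k) mod \<bar>tcls n g r\<bar> = (int e + PS r (k mod L r)) mod \<bar>tcls n g r\<bar>"
    using PS_mod[of r k] by (metis mod_add_right_eq)
  moreover have "k mod L r < L r" using L_pos by simp
  ultimately show ?thesis unfolding Xcls_char[OF r] using md b sgpow_in[OF r] a by metis
qed

lemma Xcls_inf:
  assumes r: "r \<in> {1..n}" and T: "tcls n g r \<noteq> 0" and e: "e \<ge> 1"
  shows "infinite (Xcls n g r e)"
proof -
  define f where "f = (\<lambda>p::nat. (r, e + p * nat \<bar>tcls n g r\<bar>))"
  have "inj f" unfolding f_def using T by (auto intro!: injI)
  then have "infinite (range f)" using finite_imageD[of f UNIV] infinite_UNIV_nat by blast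
  moreover have "range f \<subseteq> Xcls n g r e"
  proof
    fix x assume "x \<in> range f"
    then obtain p where x: "x = (r, e + p * nat \<bar>tcls n g r\<bar>)" unfolding f_def by blast
    have "int (e + p * nat \<bar>tcls n g r\<bar>) = int e + int p * \<bar>tcls n g r\<bar>" by simp
    then have "int (e + p * nat \<bar>tcls n g r\<bar>) mod \<bar>tcls n g r\<bar> = (int e + PS r 0) mod \<bar>tcls n g r\<bar>"
      by (simp add: PS_def)
    then show "x \<in> Xcls n g r e" unfolding x using Xcls_intro[OF r, of r 0] e by simp
  qed
  ultimately show ?thesis using infinite_super by blast
qed

end


context hsg2 begin

lemma Tplus_formula:
  assumes r: "r \<in> {1..n}" and T: "tcls n g r \<ge> 0" and m0: "int m0 \<ge> int Z + B"
  shows "(g ^^ j) (r,m0) = ((sg ^^ j) r, nat (int m0 + PS r j)) \<and> int m0 + PS r j \<ge> 1"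
proof -
  have "m0 \<ge> 1" using m0 Z1 B_nonneg by linarith
  moreover have "\<forall>i<j. int m0 + PS r i \<ge> int Z"
  proof (intro allI impI)
    fix i have "PS r i \<ge> - B" by (rule PS_lower[OF r T])
    then show "int m0 + PS r i \<ge> int Z" using m0 by linarith
  qed
  ultimately show ?thesis using G2[OF r] by blast
qed

lemma Tplus:
  assumes r: "r \<in> {1..n}" and T: "tcls n g r > 0" and m0: "int m0 \<ge> int Z + B"
  shows "Fw (r,m0) \<subseteq> Xcls n g r m0" "finite (Xcls n g r m0 - Fw (r,m0))"
proof -
  have F: "\<And>j. (g ^^ j) (r,m0) = ((sg ^^ j) r, nat (int m0 + PS r j)) \<and> int m0 + PS r j \<ge> 1"
    using Tplus_formula[OF r _ m0] T by simp
  show "Fw (r,m0) \<subseteq> Xcls n g r m0"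
  proof
    fix x assume "x \<in> Fw (r,m0)"
    then obtain j where x: "x = (g ^^ j) (r,m0)" unfolding Fw_def by blast
    have i: "int (nat (int m0 + PS r j)) = int m0 + PS r j" using F[of j] by simp
    have b1: "nat (int m0 + PS r j) \<ge> 1" using F[of j] by (subst le_nat_iff) auto
    have md: "int (nat (int m0 + PS r j)) mod \<bar>tcls n g r\<bar> = (int m0 + PS r j) mod \<bar>tcls n g r\<bar>"
      using i by simp
    show "x \<in> Xcls n g r m0" unfolding x F[THEN conjunct1]
      by (rule Xcls_intro[OF r refl b1 md])
  qed
  have "Xcls n g r m0 - Fw (r,m0) \<subseteq> {1..n} \<times> {..< nat (int m0 + B)}"
  proof
    fix x assume x: "x \<in> Xcls n g r m0 - Fw (r,m0)"
    obtain a b where ab: "x = (a,b)" by (cases x)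
    from x have xc: "(a,b) \<in> Xcls n g r m0" unfolding ab by simp
    have absT: "\<bar>tcls n g r\<bar> = tcls n g r" using T by simp
    from xc obtain q where q: "q < L r" "a = (sg ^^ q) r" "int b mod tcls n g r = (int m0 + PS r q) mod tcls n g r"
      and a: "a \<in> {1..n}" and b1: "b \<ge> 1"
      unfolding Xcls_char[OF r] absT by blast
    show "x \<in> {1..n} \<times> {..< nat (int m0 + B)}"
    proof (rule ccontr)
      assume "x \<notin> {1..n} \<times> {..< nat (int m0 + B)}"
      then have bge: "int b \<ge> int m0 + B" using a ab by auto
      define c where "c = int m0 + PS r q"
      have "PS r q \<le> B" using PS_small[OF r q(1)] by simp
      then have cb: "c \<le> int b" using bge c_def by simp
      have dv: "(int b - c) mod tcls n g r = 0" using q(3) c_def by (simp add: mod_eq_dvd_iff)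
      define p where "p = (int b - c) div tcls n g r"
      have "int b - c = p * tcls n g r" using div_mult_mod_eq[of "int b - c" "tcls n g r"] dv p_def by simp
      then have bp: "int b = c + p * tcls n g r" by simp
      have p0: "p \<ge> 0" using cb T p_def by (simp add: pos_imp_zdiv_nonneg_iff)
      define j where "j = nat p * L r + q"
      have "PS r j = int (nat p) * tcls n g r + PS r q" unfolding j_def by (rule PS_period)
      then have pj: "int m0 + PS r j = int b" using bp p0 c_def by simp
      have "j mod L r = q" unfolding j_def using q(1) by simp
      then have "(sg ^^ j) r = (sg ^^ q) r" using pow_mod[of j r] by simp
      then have "(g ^^ j) (r,m0) = (a, b)" using F[of j] pj q(2) by simp
      then have "x \<in> Fw (r,m0)" unfolding Fw_def ab
        by (intro CollectI exI[where x=j]) simp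
      with x show False by simp
    qed
  qed
  then show "finite (Xcls n g r m0 - Fw (r,m0))" by (rule finite_subset) simp
qed

lemma Tminus_sub:
  assumes r: "r \<in> {1..n}" and T: "tcls n g r < 0" and m0: "int m0 \<ge> int Z + B"
    and p: "p \<ge> 1" and q: "q \<le> L r"
  shows "int m0 + PS r q + int p * (- tcls n g r) \<ge> 1 \<and>
    (g ^^ (p * L r - q)) ((sg ^^ q) r, nat (int m0 + PS r q + int p * (- tcls n g r))) = (r, m0)"
proof -
  define P where "P = - tcls n g r"
  have P0: "P > 0" using T P_def by simp
  define s where "s = (sg ^^ q) r"
  have s: "s \<in> {1..n}" using sgpow_in[OF r] s_def by simp
  have lowq: "PS r k \<ge> - int (k div L r) * P - B" for k
  proof -
    have "\<bar>PS r (k mod L r)\<bar> \<le> B" using PS_small[OF r] L_pos by simp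
    then show ?thesis using PS_divmod[of r k] P_def by simp
  qed
  have qd: "q div L r \<le> 1" using div_le_mono[OF q, of "L r"] L_pos by simp
  have "PS r q \<ge> - P - B"
  proof -
    have "int (q div L r) * P \<le> 1 * P" using qd P0 by (intro mult_right_mono) auto
    then show ?thesis using lowq[of q] by simp
  qed
  then have mge: "int m0 + PS r q + int p * P \<ge> int Z"
  proof -
    have "int p * P \<ge> 1 * P" using p P0 by (intro mult_right_mono) auto
    then show ?thesis using \<open>PS r q \<ge> - P - B\<close> m0 by simp
  qed
  define m where "m = nat (int m0 + PS r q + int p * P)"
  have im: "int m = int m0 + PS r q + int p * P" using mge Z1 m_def by simp
  have m1: "m \<ge> 1" using im mge Z1 by simp
  have "L r \<le> p * L r" using p by simp
  then have qL: "q < p * L r \<or> q = p * L r" using q by linarith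
  have cond: "\<forall>i < p * L r - q. int m + PS s i \<ge> int Z"
  proof (intro allI impI)
    fix i assume i: "i < p * L r - q"
    have add: "PS r (q + i) = PS r q + PS s i" using PS_add s_def by simp
    have qi: "q + i < p * L r" using i by simp
    then have "(q + i) div L r < p" using L_pos by (simp add: div_less_iff_less_mult)
    then have "int ((q + i) div L r) \<le> int p - 1" by simp
    then have "int ((q + i) div L r) * P \<le> (int p - 1) * P" using P0 by (intro mult_right_mono) auto
    moreover have "- (int p - 1) * P = - ((int p - 1) * P)" by (simp only: mult_minus_left)
    ultimately have "PS r (q + i) \<ge> - (int p - 1) * P - B" using lowq[of "q+i"] by linarith
    then have "PS r q + PS s i \<ge> - (int p - 1) * P - B" using add by simp
    moreover have "- (int p - 1) * P = P - int p * P" by (simp add: algebra_simps)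
    ultimately show "int m + PS s i \<ge> int Z" using im m0 P0 by linarith
  qed
  from G2[OF s m1 cond] have g2: "(g ^^ (p * L r - q)) (s, m) = ((sg ^^ (p * L r - q)) s, nat (int m + PS s (p * L r - q)))" by blast
  have qle: "q \<le> p * L r" using qL by auto
  have "(sg ^^ (p * L r - q)) s = (sg ^^ (p * L r - q + q)) r"
    unfolding s_def by (simp add: funpow_add)
  also have "p * L r - q + q = p * L r" using qle by simp
  finally have "(sg ^^ (p * L r - q)) s = (sg ^^ (p * L r)) r" .
  also have "\<dots> = r" by (rule pow_multL)
  finally have e1: "(sg ^^ (p * L r - q)) s = r" .
  have "PS r (q + (p * L r - q)) = PS r q + PS s (p * L r - q)" using PS_add s_def by simp
  moreover have "PS r (q + (p * L r - q)) = int p * tcls n g r" using qle PS_period[where p=p and q=0 and r=r] by (simp add: PS_def)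
  ultimately have "int m + PS s (p * L r - q) = int m0" using im P_def by simp
  then have "(g ^^ (p * L r - q)) (s, m) = (r, m0)" using g2 e1 by simp
  then show ?thesis using mge Z1 unfolding m_def s_def P_def by simp
qed

end


context hsg2 begin

lemma Tminus:
  assumes r: "r \<in> {1..n}" and T: "tcls n g r < 0" and m0: "int m0 \<ge> int Z + B"
  shows "Bw (r,m0) \<subseteq> Xcls n g r m0" "finite (Xcls n g r m0 - Bw (r,m0))"
proof -
  define P where "P = - tcls n g r"
  have P0: "P > 0" using T P_def by simp
  have absT: "\<bar>tcls n g r\<bar> = P" using T P_def by simp
  have Lp: "L r > 0" by (rule L_pos)
  show "Bw (r,m0) \<subseteq> Xcls n g r m0"
  proof
    fix y assume "y \<in> Bw (r,m0)"
    then obtain k where yk: "(g ^^ k) y = (r,m0)" unfolding Bw_def by blast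
    define p where "p = k div L r + 1"
    have dm: "k div L r * L r + k mod L r = k" by (rule div_mult_mod_eq)
    have ml: "k mod L r < L r" using Lp by simp
    have pL: "p * L r = k div L r * L r + L r" unfolding p_def by (simp add: algebra_simps)
    have kp: "k < p * L r" using dm ml pL by linarith
    define q where "q = p * L r - k"
    have qL: "q \<le> L r" unfolding q_def using pL dm by linarith
    have p1: "p \<ge> 1" unfolding p_def by simp
    have kq: "p * L r - q = k" unfolding q_def using kp by simp
    define v where "v = int m0 + PS r q + int p * (- tcls n g r)"
    from Tminus_sub[OF r T m0 p1 qL] have v1: "v \<ge> 1" and
      gz: "(g ^^ k) ((sg ^^ q) r, nat v) = (r, m0)" unfolding v_def kq by simp_all
    have "y = ((sg ^^ q) r, nat v)" using yk gz gpow_inj[of k] by (metis injD)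
    moreover have "((sg ^^ q) r, nat v) \<in> Xcls n g r m0"
    proof (rule Xcls_intro[OF r refl])
      show "nat v \<ge> 1" using v1 by (subst le_nat_iff) auto
      have "int (nat v) = int m0 + PS r q + int p * \<bar>tcls n g r\<bar>" using v1 v_def absT P_def by simp
      then show "int (nat v) mod \<bar>tcls n g r\<bar> = (int m0 + PS r q) mod \<bar>tcls n g r\<bar>"
        by (simp add: mult.commute)
    qed
    ultimately show "y \<in> Xcls n g r m0" by simp
  qed
  have "Xcls n g r m0 - Bw (r,m0) \<subseteq> {1..n} \<times> {..< nat (int m0 + B + P)}"
  proof
    fix x assume x: "x \<in> Xcls n g r m0 - Bw (r,m0)"
    obtain a b where ab: "x = (a,b)" by (cases x)
    from x have xc: "(a,b) \<in> Xcls n g r m0" unfolding ab by simp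
    from xc obtain q where q: "q < L r" "a = (sg ^^ q) r" "int b mod P = (int m0 + PS r q) mod P"
      and a: "a \<in> {1..n}" and b1: "b \<ge> 1"
      unfolding Xcls_char[OF r] absT by blast
    show "x \<in> {1..n} \<times> {..< nat (int m0 + B + P)}"
    proof (rule ccontr)
      assume "x \<notin> {1..n} \<times> {..< nat (int m0 + B + P)}"
      then have bge: "int b \<ge> int m0 + B + P" using a ab by auto
      define c where "c = int m0 + PS r q"
      have "PS r q \<le> B" using PS_small[OF r q(1)] by simp
      then have cb: "c + P \<le> int b" using bge c_def by simp
      have dv: "(int b - c) mod P = 0" using q(3) c_def by (simp add: mod_eq_dvd_iff)
      define p where "p = (int b - c) div P"
      have bcp: "int b - c = p * P" using div_mult_mod_eq[of "int b - c" P] dv p_def by simp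
      have p1: "p \<ge> 1"
      proof (rule ccontr)
        assume "\<not> p \<ge> 1"
        then have "p \<le> 0" by simp
        then have "p * P \<le> 0" using P0 by (simp add: mult_nonpos_nonneg)
        then show False using bcp cb P0 by linarith
      qed
      have np1: "nat p \<ge> 1" using p1 by simp
      from Tminus_sub[OF r T m0 np1 less_imp_le[OF q(1)]]
      have "(g ^^ (nat p * L r - q)) ((sg ^^ q) r, nat (int m0 + PS r q + int (nat p) * (- tcls n g r))) = (r, m0)"
        by simp
      moreover have "nat (int m0 + PS r q + int (nat p) * (- tcls n g r)) = b"
        using bcp p1 c_def P_def by simp
      ultimately have "(g ^^ (nat p * L r - q)) (a, b) = (r, m0)" using q(2) by simp
      then have "x \<in> Bw (r,m0)" unfolding Bw_def ab by blast
      with x show False by simp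
    qed
  qed
  then show "finite (Xcls n g r m0 - Bw (r,m0))" by (rule finite_subset) simp
qed

lemma pow_fix: "(g ^^ p) x = x \<Longrightarrow> (g ^^ (p * j)) x = x"
proof (induct j)
  case (Suc j)
  have "(g ^^ (p * Suc j)) x = (g ^^ p) ((g ^^ (p * j)) x)" by (simp add: funpow_add)
  then show ?case using Suc by simp
qed simp

lemma per_fin: assumes px: "(g ^^ p) x = x" and p0: "p > 0" shows "finite (gorb g x)"
proof -
  have "gorb g x \<subseteq> (\<lambda>i. (g ^^ i) x) ` {..<p}"
  proof
    fix y assume "y \<in> gorb g x"
    then have "y \<in> Fw x \<or> y \<in> Bw x" unfolding gorb_split by simp
    then obtain j where "y = (g ^^ j) x \<or> (g ^^ j) y = x" unfolding Fw_def Bw_def by blast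
    then obtain j where yj: "y = (g ^^ j) x"
    proof
      assume "(g ^^ j) y = x"
      have "(g ^^ j) ((g ^^ ((p - 1) * j)) x) = (g ^^ (j + (p - 1) * j)) x" by (simp add: funpow_add)
      also have "j + (p - 1) * j = p * j" using p0 by (simp add: algebra_simps)
      also have "(g ^^ (p * j)) x = x" by (rule pow_fix[OF px])
      finally have "y = (g ^^ ((p - 1) * j)) x" using \<open>(g ^^ j) y = x\<close> gpow_inj[of j] by (metis injD)
      then show thesis using that by blast
    qed (use that in blast)
    have "y = (g ^^ (j mod p)) x" using yj funpow_mod_eq[OF px, of j] by simp
    then show "y \<in> (\<lambda>i. (g ^^ i) x) ` {..<p}" using p0 by simp
  qed
  then show ?thesis by (rule finite_subset) simp
qed

definition Bad :: "pt set" where "Bad = {x \<in> Xn n. int (snd x) < int Z + B}"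

lemma Bad_fin: "finite Bad"
proof -
  have "Bad \<subseteq> {1..n} \<times> {..< nat (int Z + B)}" unfolding Bad_def by (auto simp: Xn_def)
  then show ?thesis by (rule finite_subset) simp
qed

lemma eventually_good:
  fixes f :: "nat \<Rightarrow> pt"
  assumes "inj f"
  shows "\<exists>K. \<forall>j\<ge>K. f j \<notin> Bad"
proof -
  have "finite (f -` Bad)" using finite_vimageI[OF Bad_fin assms] .
  then have "\<exists>K. \<forall>j\<in>f -` Bad. j < K" by (simp only: finite_nat_set_iff_bounded)
  then obtain K where "\<forall>j\<in>f -` Bad. j < K" by blast
  then show ?thesis by (metis not_le vimageI)
qed

end


lemma fp_comb: "(f ^^ a) ((f ^^ b) y) = (f ^^ (a + b)) y"
  by (simp add: funpow_add)

context hsg2 begin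

lemma notBad: "x \<in> Xn n \<Longrightarrow> x \<notin> Bad \<Longrightarrow> int (snd x) \<ge> int Z + B"
  unfolding Bad_def by auto

lemma inj_Fw:
  assumes np: "\<forall>p>0. (g ^^ p) x \<noteq> x"
  shows "inj (\<lambda>j. (g ^^ j) x)"
proof -
  have *: "(g ^^ a) x \<noteq> (g ^^ c) x" if ac: "a < c" for a c
  proof
    assume e: "(g ^^ a) x = (g ^^ c) x"
    have "(g ^^ c) x = (g ^^ a) ((g ^^ (c - a)) x)" using ac by (simp add: fp_comb)
    then have "(g ^^ (c - a)) x = x" using e gpow_inj[of a] by (metis injD)
    then show False using np ac by simp
  qed
  show ?thesis
  proof (rule injI)
    fix a c assume "(g ^^ a) x = (g ^^ c) x"
    then show "a = c" using *[of a c] *[of c a] by (metis linorder_neqE_nat)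
  qed
qed

lemma EscF:
  assumes x: "x \<in> Xn n" and np: "\<forall>p>0. (g ^^ p) x \<noteq> x"
  shows "\<exists>K r1 m1. (g ^^ K) x = (r1,m1) \<and> r1 \<in> {1..n} \<and> tcls n g r1 > 0 \<and> int m1 \<ge> int Z + B"
proof -
  define f where "f = (\<lambda>j. (g ^^ j) x)"
  have inj: "inj f" unfolding f_def by (rule inj_Fw[OF np])
  obtain K where K: "\<forall>j\<ge>K. f j \<notin> Bad" using eventually_good[OF inj] by blast
  have good: "int (snd (f j)) \<ge> int Z + B" if "j \<ge> K" for j
    using notBad[of "f j"] K that x gpow_Xn_iff unfolding f_def by blast
  obtain r1 m1 where y1: "f K = (r1, m1)" by (cases "f K")
  have y1X: "(r1,m1) \<in> Xn n" using y1 x gpow_Xn_iff unfolding f_def by metis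
  then have r1: "r1 \<in> {1..n}" and m1: "m1 \<ge> 1" by (auto simp: Xn_iff)
  have m1g: "int m1 \<ge> int Z + B" using good[of K] y1 by simp
  have fp: "f (K + p * L r1) = (r1, nat (int m1 + int p * tcls n g r1)) \<and> int m1 + int p * tcls n g r1 \<ge> 1" for p
  proof -
    have step: "f (K + i) = (g ^^ i) (r1, m1)" for i
      unfolding f_def using y1[unfolded f_def] by (simp add: funpow_add add.commute[of K])
    have "\<forall>i<p * L r1. snd ((g ^^ i) (r1,m1)) \<ge> Z"
    proof (intro allI impI)
      fix i have "int (snd (f (K + i))) \<ge> int Z + B" using good by simp
      then show "snd ((g ^^ i) (r1,m1)) \<ge> Z" using step[of i] B_nonneg by simp
    qed
    from G[OF r1 m1 this] have "(g ^^ (p * L r1)) (r1, m1) = ((sg ^^ (p * L r1)) r1, nat (int m1 + PS r1 (p * L r1))) \<and> int m1 + PS r1 (p * L r1) \<ge> 1" .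
    moreover have "PS r1 (p * L r1) = int p * tcls n g r1" using PS_period[where r=r1 and p=p and q=0] by (simp add: PS_def)
    ultimately show ?thesis using step[of "p * L r1"] pow_multL by simp
  qed
  have "tcls n g r1 > 0"
  proof (rule ccontr)
    assume "\<not> tcls n g r1 > 0"
    then consider "tcls n g r1 = 0" | "tcls n g r1 < 0" by linarith
    then show False
    proof cases
      case 1
      then have "f (K + 1 * L r1) = f K" using fp[of 1] y1 by simp
      then have "K + 1 * L r1 = K" using inj by (metis injD)
      then show False using L_pos[of r1] by simp
    next
      case 2
      have "int m1 + int m1 * tcls n g r1 \<ge> 1" using fp[of m1] by simp
      moreover have "int m1 * tcls n g r1 \<le> int m1 * (-1)" using 2 by (intro mult_left_mono) auto
      ultimately show False by simp
    qed
  qed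
  then show ?thesis using y1 r1 m1g unfolding f_def by blast
qed

lemma EscB:
  assumes x: "x \<in> Xn n" and np: "\<forall>p>0. (g ^^ p) x \<noteq> x"
  shows "\<exists>K r1 m1. (g ^^ K) (r1,m1) = x \<and> r1 \<in> {1..n} \<and> tcls n g r1 < 0 \<and> int m1 \<ge> int Z + B"
proof -
  define b where "b = (\<lambda>j. inv (g ^^ j) x)"
  have bj: "(g ^^ j) (b j) = x" for j unfolding b_def using gpow_bij[of j] by (simp add: bij_is_surj surj_f_inv_f)
  have shift: "(g ^^ i) (b j) = b (j - i)" if "i \<le> j" for i j
  proof -
    have "(g ^^ (j - i)) ((g ^^ i) (b j)) = (g ^^ j) (b j)" using that by (simp add: fp_comb)
    also have "\<dots> = (g ^^ (j - i)) (b (j - i))" using bj by simp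
    finally show ?thesis using gpow_inj[of "j - i"] by (metis injD)
  qed
  have *: "b a \<noteq> b c" if ac: "a < c" for a c
  proof
    assume e: "b a = b c"
    have "(g ^^ (c - a)) x = (g ^^ (c - a)) ((g ^^ a) (b a))" using bj by simp
    also have "\<dots> = (g ^^ c) (b a)" using ac by (simp add: fp_comb)
    also have "\<dots> = x" using e bj by simp
    finally show False using np ac by simp
  qed
  have inj: "inj b"
  proof (rule injI)
    fix a c assume "b a = b c"
    then show "a = c" using *[of a c] *[of c a] by (cases a c rule: linorder_cases) auto
  qed
  have bX: "b j \<in> Xn n" for j
  proof -
    have "(g ^^ j) (b j) \<in> Xn n" using bj[of j] x by simp
    then show ?thesis using gpow_Xn_iff[of j "b j"] by simp
  qed
  obtain K where K: "\<forall>j\<ge>K. b j \<notin> Bad" using eventually_good[OF inj] by blast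
  have good: "int (snd (b j)) \<ge> int Z + B" if "j \<ge> K" for j
  proof -
    have "b j \<notin> Bad" using K that by simp
    then show ?thesis by (rule notBad[OF bX])
  qed
  obtain r1 m1 where y1: "b K = (r1, m1)" by (cases "b K")
  have m1g: "int m1 \<ge> int Z + B" using good[of K] y1 by simp
  have r1: "r1 \<in> {1..n}" using bX[of K] y1 by (simp add: Xn_iff)
  have bp: "b (K + p * L r1) = (r1, nat (int m1 - int p * tcls n g r1)) \<and> int m1 - int p * tcls n g r1 \<ge> 1" for p
  proof -
    obtain r' m' where w: "b (K + p * L r1) = (r', m')" by (cases "b (K + p * L r1)")
    have r': "r' \<in> {1..n}" and m': "m' \<ge> 1" using bX[of "K + p * L r1"] w by (auto simp: Xn_iff)
    have "\<forall>i<p * L r1. snd ((g ^^ i) (r',m')) \<ge> Z"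
    proof (intro allI impI)
      fix i assume i: "i < p * L r1"
      have "(g ^^ i) (r',m') = b (K + p * L r1 - i)" using shift[of i "K + p * L r1"] i w by simp
      moreover have "int (snd (b (K + p * L r1 - i))) \<ge> int Z + B" using good i by simp
      ultimately show "snd ((g ^^ i) (r',m')) \<ge> Z" using B_nonneg by simp
    qed
    from G[OF r' m' this] have gw: "(g ^^ (p * L r1)) (r', m') = ((sg ^^ (p * L r1)) r', nat (int m' + PS r' (p * L r1)))"
      and gw1: "int m' + PS r' (p * L r1) \<ge> 1" by blast+
    have "(g ^^ (p * L r1)) (r', m') = b K" using shift[of "p * L r1" "K + p * L r1"] w by simp
    then have e: "(sg ^^ (p * L r1)) r' = r1" "nat (int m' + PS r' (p * L r1)) = m1" using gw y1 by simp_all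
    have "r1 \<in> cls n g r'" using e(1) pow_cls[of "p * L r1" r'] by simp
    then have Lr: "L r1 = L r'" and Tr: "tcls n g r1 = tcls n g r'" using L_same[OF \<open>r1 \<in> cls n g r'\<close>] tcls_same[OF \<open>r1 \<in> cls n g r'\<close>] by simp_all
    have "(sg ^^ (p * L r1)) r' = r'" using pow_multL[of p r'] Lr by simp
    then have "r' = r1" using e(1) by simp
    have "PS r' (p * L r1) = int p * tcls n g r1" using PS_period[where r=r' and p=p and q=0] Lr Tr by (simp add: PS_def)
    moreover have "int m1 = int m' + PS r' (p * L r1)" using e(2) gw1 by (simp add: nat_eq_iff)
    ultimately have "int m1 = int m' + int p * tcls n g r1" by simp
    then show ?thesis using w \<open>r' = r1\<close> m' by simp
  qed
  have "tcls n g r1 < 0"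
  proof (rule ccontr)
    assume "\<not> tcls n g r1 < 0"
    then consider "tcls n g r1 = 0" | "tcls n g r1 > 0" by linarith
    then show False
    proof cases
      case 1
      then have "b (K + 1 * L r1) = b K" using bp[of 1] y1 by simp
      then have "K + 1 * L r1 = K" using inj by (metis injD)
      then show False using L_pos[of r1] by simp
    next
      case 2
      have "int m1 - int m1 * tcls n g r1 \<ge> 1" using bp[of m1] by simp
      moreover have "int m1 * tcls n g r1 \<ge> int m1 * 1" using 2 by (intro mult_left_mono) auto
      ultimately show False by simp
    qed
  qed
  moreover have "(g ^^ K) (r1, m1) = x" using bj[of K] y1 by simp
  ultimately show ?thesis using r1 m1g by blast
qed

end


lemma almost_eqI: "finite (U - A) \<Longrightarrow> finite (A - U) \<Longrightarrow> almost_eq U A"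
  unfolding almost_eq_def by simp

context hsg2 begin

lemma Fw_sub: "Fw x \<subseteq> gorb g x" using gorb_split by simp
lemma Bw_sub: "Bw x \<subseteq> gorb g x" using gorb_split by simp

lemma infinite_from:
  assumes "infinite X" "finite (X - Y)" shows "infinite Y"
proof
  assume "finite Y"
  then have "finite ((X - Y) \<union> Y)" using assms(2) by simp
  moreover have "X \<subseteq> (X - Y) \<union> Y" by blast
  ultimately show False using assms(1) finite_subset by blast
qed

lemma nonper: assumes "infinite (gorb g x)" shows "\<forall>p>0. (g ^^ p) x \<noteq> x"
  using per_fin assms by blast

lemma cls_disj:
  assumes "tcls n g k > 0" "tcls n g r < 0"
  shows "Xcls n g k e \<inter> Xcls n g r e' = {}"
proof (rule ccontr)
  assume "Xcls n g k e \<inter> Xcls n g r e' \<noteq> {}"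
  then obtain a b where "(a,b) \<in> Xcls n g k e" "(a,b) \<in> Xcls n g r e'" by auto
  then have "a \<in> cls n g k" "a \<in> cls n g r" using Xcls_row by blast+
  then have "tcls n g k = tcls n g r" using tcls_same by metis
  then show False using assms by simp
qed

lemma Orb_plus:
  assumes k: "k \<in> {1..n}" and T: "tcls n g k > 0" and m: "int m \<ge> int Z + B"
  shows "infinite (gorb g (k,m))"
    "\<exists>r1 m1. r1 \<in> {1..n} \<and> tcls n g r1 < 0 \<and> m1 \<ge> 1 \<and> Xcls n g k m \<inter> Xcls n g r1 m1 = {} \<and>
      almost_eq (gorb g (k,m)) (Xcls n g k m \<union> Xcls n g r1 m1)"
proof -
  define x where "x = (k,m)"
  have m1: "m \<ge> 1" using m Z1 B_nonneg by linarith
  have xX: "x \<in> Xn n" using k m1 by (simp add: x_def Xn_iff)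
  note FS = Tplus(1)[OF k T m] and FF = Tplus(2)[OF k T m]
  have "infinite (Xcls n g k m)" using Xcls_inf[OF k _ m1] T by simp
  then have "infinite (Fw x)" using infinite_from FF x_def by blast
  then show inf: "infinite (gorb g (k,m))" using Fw_sub x_def finite_subset by blast
  have np: "\<forall>p>0. (g ^^ p) x \<noteq> x" using nonper inf x_def by simp
  obtain K r1 m1 where y1: "(g ^^ K) (r1,m1) = x" and r1: "r1 \<in> {1..n}" and T1: "tcls n g r1 < 0"
    and m1g: "int m1 \<ge> int Z + B" using EscB[OF xX np] by blast
  note BS = Tminus(1)[OF r1 T1 m1g] and BF = Tminus(2)[OF r1 T1 m1g]
  have Bx: "Bw x \<subseteq> (\<lambda>j. inv (g ^^ j) x) ` {..<K} \<union> Bw (r1,m1)"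
  proof
    fix y assume "y \<in> Bw x"
    then obtain j where yj: "(g ^^ j) y = x" unfolding Bw_def by blast
    show "y \<in> (\<lambda>j. inv (g ^^ j) x) ` {..<K} \<union> Bw (r1,m1)"
    proof (cases "j < K")
      case True
      have "y = inv (g ^^ j) x" using yj gpow_inj[of j] by (metis inv_f_f)
      then show ?thesis using True by blast
    next
      case False
      have "(g ^^ K) ((g ^^ (j - K)) y) = (g ^^ j) y" using False by (simp add: fp_comb)
      then have "(g ^^ K) ((g ^^ (j - K)) y) = (g ^^ K) (r1, m1)" using yj y1 by simp
      then have "(g ^^ (j - K)) y = (r1,m1)" using gpow_inj[of K] by (metis injD)
      then show ?thesis unfolding Bw_def by blast
    qed
  qed
  have By: "Bw (r1,m1) \<subseteq> gorb g x"
  proof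
    fix y assume "y \<in> Bw (r1,m1)"
    then obtain j where "(g ^^ j) y = (r1,m1)" unfolding Bw_def by blast
    then have "(g ^^ (K + j)) y = x" using y1 by (simp add: fp_comb[symmetric])
    then show "y \<in> gorb g x" using Bw_sub unfolding Bw_def by blast
  qed
  have m1_1: "m1 \<ge> 1" using m1g Z1 B_nonneg by linarith
  have ae: "almost_eq (gorb g x) (Xcls n g k m \<union> Xcls n g r1 m1)"
  proof (rule almost_eqI)
    have "gorb g x - (Xcls n g k m \<union> Xcls n g r1 m1) \<subseteq> (\<lambda>j. inv (g ^^ j) x) ` {..<K}"
      using gorb_split[of x] FS Bx BS x_def by blast
    then show "finite (gorb g x - (Xcls n g k m \<union> Xcls n g r1 m1))" by (rule finite_subset) simp
    have "(Xcls n g k m \<union> Xcls n g r1 m1) - gorb g x \<subseteq> (Xcls n g k m - Fw x) \<union> (Xcls n g r1 m1 - Bw (r1,m1))"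
      using Fw_sub[of x] By by blast
    then show "finite ((Xcls n g k m \<union> Xcls n g r1 m1) - gorb g x)" using FF BF x_def
      by (metis finite_UnI finite_subset)
  qed
  show "\<exists>r1 m1. r1 \<in> {1..n} \<and> tcls n g r1 < 0 \<and> m1 \<ge> 1 \<and> Xcls n g k m \<inter> Xcls n g r1 m1 = {} \<and>
      almost_eq (gorb g (k,m)) (Xcls n g k m \<union> Xcls n g r1 m1)"
    using r1 T1 m1_1 cls_disj[OF T T1] ae x_def by blast
qed

lemma Orb_minus:
  assumes k: "k \<in> {1..n}" and T: "tcls n g k < 0" and m: "int m \<ge> int Z + B"
  shows "infinite (gorb g (k,m))"
    "\<exists>r1 m1. r1 \<in> {1..n} \<and> tcls n g r1 > 0 \<and> m1 \<ge> 1 \<and> Xcls n g r1 m1 \<inter> Xcls n g k m = {} \<and>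
      almost_eq (gorb g (k,m)) (Xcls n g r1 m1 \<union> Xcls n g k m)"
proof -
  define x where "x = (k,m)"
  have m1: "m \<ge> 1" using m Z1 B_nonneg by linarith
  have xX: "x \<in> Xn n" using k m1 by (simp add: x_def Xn_iff)
  note BS = Tminus(1)[OF k T m] and BF = Tminus(2)[OF k T m]
  have "infinite (Xcls n g k m)" using Xcls_inf[OF k _ m1] T by simp
  then have "infinite (Bw x)" using infinite_from BF x_def by blast
  then show inf: "infinite (gorb g (k,m))" using Bw_sub x_def finite_subset by blast
  have np: "\<forall>p>0. (g ^^ p) x \<noteq> x" using nonper inf x_def by simp
  obtain K r1 m1 where y1: "(g ^^ K) x = (r1,m1)" and r1: "r1 \<in> {1..n}" and T1: "tcls n g r1 > 0"
    and m1g: "int m1 \<ge> int Z + B" using EscF[OF xX np] by blast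
  note FS = Tplus(1)[OF r1 T1 m1g] and FF = Tplus(2)[OF r1 T1 m1g]
  have Fx: "Fw x \<subseteq> (\<lambda>j. (g ^^ j) x) ` {..<K} \<union> Fw (r1,m1)"
  proof
    fix y assume "y \<in> Fw x"
    then obtain j where yj: "y = (g ^^ j) x" unfolding Fw_def by blast
    show "y \<in> (\<lambda>j. (g ^^ j) x) ` {..<K} \<union> Fw (r1,m1)"
    proof (cases "j < K")
      case True
      then show ?thesis using yj by blast
    next
      case False
      have "(g ^^ (j - K)) ((g ^^ K) x) = (g ^^ j) x" using False by (simp add: fp_comb)
      then have "y = (g ^^ (j - K)) (r1,m1)" using yj y1 by simp
      then show ?thesis unfolding Fw_def by blast
    qed
  qed
  have Fy: "Fw (r1,m1) \<subseteq> gorb g x"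
  proof
    fix y assume "y \<in> Fw (r1,m1)"
    then obtain j where "y = (g ^^ j) (r1,m1)" unfolding Fw_def by blast
    then have "y = (g ^^ (j + K)) x" using y1 by (simp add: fp_comb[symmetric])
    then show "y \<in> gorb g x" using Fw_sub unfolding Fw_def by blast
  qed
  have m1_1: "m1 \<ge> 1" using m1g Z1 B_nonneg by linarith
  have ae: "almost_eq (gorb g x) (Xcls n g r1 m1 \<union> Xcls n g k m)"
  proof (rule almost_eqI)
    have "gorb g x - (Xcls n g r1 m1 \<union> Xcls n g k m) \<subseteq> (\<lambda>j. (g ^^ j) x) ` {..<K}"
      using gorb_split[of x] FS Fx BS x_def by blast
    then show "finite (gorb g x - (Xcls n g r1 m1 \<union> Xcls n g k m))" by (rule finite_subset) simp
    have "(Xcls n g r1 m1 \<union> Xcls n g k m) - gorb g x \<subseteq> (Xcls n g r1 m1 - Fw (r1,m1)) \<union> (Xcls n g k m - Bw x)"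
      using Bw_sub[of x] Fy by blast
    then show "finite ((Xcls n g r1 m1 \<union> Xcls n g k m) - gorb g x)" using FF BF x_def
      by (metis finite_UnI finite_subset)
  qed
  show "\<exists>r1 m1. r1 \<in> {1..n} \<and> tcls n g r1 > 0 \<and> m1 \<ge> 1 \<and> Xcls n g r1 m1 \<inter> Xcls n g k m = {} \<and>
      almost_eq (gorb g (k,m)) (Xcls n g r1 m1 \<union> Xcls n g k m)"
    using r1 T1 m1_1 cls_disj[OF T1 T] ae x_def by blast
qed

lemma Orb_zero:
  assumes k: "k \<in> {1..n}" and T: "tcls n g k = 0" and m: "int m \<ge> int Z + B"
  shows "finite (gorb g (k,m))"
proof -
  have "(g ^^ L k) (k,m) = ((sg ^^ L k) k, nat (int m + PS k (L k)))"
    using Tplus_formula[OF k _ m] T by simp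
  also have "\<dots> = (k, m)" using powL T tcls_PS by simp
  finally show ?thesis using per_fin L_pos by blast
qed

end


context hsg begin

lemma Cg_sub: "j \<in> Cg n g i \<Longrightarrow> j \<in> {1..n} \<and> tcls n g j \<noteq> 0"
  unfolding Cg_def Ig_def by blast

lemma Cg_closed: assumes j: "j \<in> Cg n g i" and a: "a \<in> cls n g j" shows "a \<in> Cg n g i"
proof -
  have j1: "j \<in> {1..n}" and jT: "tcls n g j \<noteq> 0" using Cg_sub[OF j] by auto
  have "a \<in> {1..n}" using cls_sub[OF j1] a by blast
  moreover have "tcls n g a \<noteq> 0" using tcls_same[OF a] jT by simp
  moreover have "cls n g a = cls n g j" using cls_same[OF a] .
  moreover have "(cls n g j, cls n g i) \<in> simg n g" using j unfolding Cg_def by blast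
  ultimately show ?thesis unfolding Cg_def Ig_def by simp
qed

lemma Cg_not: assumes k: "k \<notin> Cg n g i" and a: "a \<in> cls n g k" shows "a \<notin> Cg n g i"
proof
  assume "a \<in> Cg n g i"
  moreover have "k \<in> cls n g a" using cls_same[OF a] self_cls[of k] by simp
  ultimately show False using Cg_closed k by blast
qed

lemma simg_step:
  assumes "(a, b) \<in> simbase n g \<or> (b, a) \<in> simbase n g" and "(b, c) \<in> simg n g"
  shows "(a, c) \<in> simg n g"
proof -
  let ?R = "simbase n g \<union> (simbase n g)\<inverse>"
  have ab: "(a, b) \<in> ?R" using assms(1) by blast
  from assms(2) consider "(b, c) \<in> Id_on {cls n g k | k. k \<in> Ig n g}" | "(b, c) \<in> ?R\<^sup>+"
    unfolding simg_def by blast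
  then have "(a, c) \<in> ?R\<^sup>+"
  proof cases
    case 1 then have "b = c" by (simp add: Id_on_def)
    then show ?thesis using ab by blast
  next
    case 2 then show ?thesis using ab by (meson r_into_trancl trancl_trans)
  qed
  then show ?thesis unfolding simg_def by blast
qed

end

context hsg2 begin

definition PP :: "nat \<Rightarrow> pt \<Rightarrow> bool" where
  "PP i x \<longleftrightarrow> x \<in> Xn n \<and> infinite (gorb g x) \<and> (\<exists>j\<in>Cg n g i. \<exists>j'\<in>Cg n g i. splits n g (gorb g x) j j')"

lemma gpart_eq: "gpart n g i x = (if PP i x then g x else x)"
  unfolding gpart_def PP_def by simp

lemma partB:
  assumes k: "k \<in> Cg n g i" and m: "int m \<ge> int Z + B"
  shows "PP i (k,m)"
proof -
  have k1: "k \<in> {1..n}" and kT: "tcls n g k \<noteq> 0" using Cg_sub[OF k] by auto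
  have m1: "m \<ge> 1" using m Z1 B_nonneg by linarith
  have xX: "(k,m) \<in> Xn n" using k1 m1 by (simp add: Xn_iff)
  have kI: "k \<in> Ig n g" using k1 kT unfolding Ig_def by simp
  have kS: "(cls n g k, cls n g i) \<in> simg n g" using k unfolding Cg_def by blast
  consider "tcls n g k > 0" | "tcls n g k < 0" using kT by linarith
  then show ?thesis
  proof cases
    case 1
    note inf = Orb_plus(1)[OF k1 1 m]
    from Orb_plus(2)[OF k1 1 m] obtain r1 m1 where r1: "r1 \<in> {1..n}" "tcls n g r1 < 0" "m1 \<ge> 1"
      "Xcls n g k m \<inter> Xcls n g r1 m1 = {}" "almost_eq (gorb g (k,m)) (Xcls n g k m \<union> Xcls n g r1 m1)"
      by blast
    have sp: "splits n g (gorb g (k,m)) k r1" unfolding splits_def using r1 m1 by blast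
    have r1I: "r1 \<in> Ig n g" using r1 unfolding Ig_def by simp
    have "(cls n g k, cls n g r1) \<in> simbase n g" unfolding simbase_def using kI r1I xX sp by blast
    then have "(cls n g r1, cls n g i) \<in> simg n g" using simg_step kS by blast
    then have "r1 \<in> Cg n g i" using r1I unfolding Cg_def by blast
    then show ?thesis unfolding PP_def using xX inf sp k by blast
  next
    case 2
    note inf = Orb_minus(1)[OF k1 2 m]
    from Orb_minus(2)[OF k1 2 m] obtain r1 m1 where r1: "r1 \<in> {1..n}" "tcls n g r1 > 0" "m1 \<ge> 1"
      "Xcls n g r1 m1 \<inter> Xcls n g k m = {}" "almost_eq (gorb g (k,m)) (Xcls n g r1 m1 \<union> Xcls n g k m)"
      by blast
    have sp: "splits n g (gorb g (k,m)) r1 k" unfolding splits_def using r1 m1 by blast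
    have r1I: "r1 \<in> Ig n g" using r1 unfolding Ig_def by simp
    have "(cls n g r1, cls n g k) \<in> simbase n g" unfolding simbase_def using kI r1I xX sp by blast
    then have "(cls n g r1, cls n g i) \<in> simg n g" using simg_step kS by blast
    then have "r1 \<in> Cg n g i" using r1I unfolding Cg_def by blast
    then show ?thesis unfolding PP_def using xX inf sp k by blast
  qed
qed

lemma ae_fin:
  assumes "almost_eq U A" "almost_eq U A'" "Xk \<subseteq> A'" "Xk \<inter> A = {}"
  shows "finite Xk"
proof -
  have "Xk \<subseteq> (A' - U) \<union> (U - A)" using assms(3,4) by blast
  moreover have "finite ((A' - U) \<union> (U - A))" using assms(1,2) unfolding almost_eq_def by simp
  ultimately show ?thesis using finite_subset by blast
qed

lemma Xcls_Cg_disj: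
  assumes k: "k \<notin> Cg n g i" and j: "j \<in> Cg n g i"
  shows "Xcls n g k m \<inter> Xcls n g j d = {}"
proof (rule ccontr)
  assume "Xcls n g k m \<inter> Xcls n g j d \<noteq> {}"
  then obtain a b where "(a,b) \<in> Xcls n g k m" "(a,b) \<in> Xcls n g j d" by auto
  then have "a \<in> cls n g k" "a \<in> cls n g j" using Xcls_row by blast+
  then show False using Cg_not[OF k] Cg_closed[OF j] by blast
qed

lemma partA:
  assumes k1: "k \<in> {1..n}" and k: "k \<notin> Cg n g i" and m: "int m \<ge> int Z + B"
  shows "\<not> PP i (k,m)"
proof
  assume "PP i (k,m)"
  then obtain j j' d e where inf: "infinite (gorb g (k,m))" and j: "j \<in> Cg n g i" and j': "j' \<in> Cg n g i"
    and ae: "almost_eq (gorb g (k,m)) (Xcls n g j d \<union> Xcls n g j' e)"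
    unfolding PP_def splits_def by blast
  have m1: "m \<ge> 1" using m Z1 B_nonneg by linarith
  have dj: "Xcls n g k m \<inter> (Xcls n g j d \<union> Xcls n g j' e) = {}"
    using Xcls_Cg_disj[OF k j] Xcls_Cg_disj[OF k j'] by blast
  consider "tcls n g k = 0" | "tcls n g k > 0" | "tcls n g k < 0" by linarith
  then show False
  proof cases
    case 1 then show False using Orb_zero[OF k1 1 m] inf by simp
  next
    case 2
    from Orb_plus(2)[OF k1 2 m] obtain r1 m1 where
      ae2: "almost_eq (gorb g (k,m)) (Xcls n g k m \<union> Xcls n g r1 m1)" by blast
    have "finite (Xcls n g k m)" by (rule ae_fin[OF ae ae2 _ dj]) blast
    then show False using Xcls_inf[OF k1 _ m1] 2 by simp
  next
    case 3
    from Orb_minus(2)[OF k1 3 m] obtain r1 m1 where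
      ae2: "almost_eq (gorb g (k,m)) (Xcls n g r1 m1 \<union> Xcls n g k m)" by blast
    have "finite (Xcls n g k m)" by (rule ae_fin[OF ae ae2 _ dj]) blast
    then show False using Xcls_inf[OF k1 _ m1] 3 by simp
  qed
qed

end


context hsg2 begin

lemma gorb_g: "gorb g (g x) = gorb g x"
proof
  show "gorb g (g x) \<subseteq> gorb g x"
  proof
    fix y assume "y \<in> gorb g (g x)"
    then obtain k where "(g ^^ k) (g x) = y \<or> (g ^^ k) y = g x" unfolding gorb_def by blast
    then show "y \<in> gorb g x"
    proof
      assume "(g ^^ k) (g x) = y"
      then have "(g ^^ Suc k) x = y" by (simp add: funpow_swap1)
      then show ?thesis unfolding gorb_def by blast
    next
      assume h: "(g ^^ k) y = g x"
      show ?thesis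
      proof (cases k)
        case 0 then have "y = (g ^^ 1) x" using h by simp
        then show ?thesis unfolding gorb_def by blast
      next
        case (Suc k')
        then have "g ((g ^^ k') y) = g x" using h by (simp add: funpow_swap1)
        then have "(g ^^ k') y = x" using g_inj by (metis injD)
        then show ?thesis unfolding gorb_def by blast
      qed
    qed
  qed
  show "gorb g x \<subseteq> gorb g (g x)"
  proof
    fix y assume "y \<in> gorb g x"
    then obtain k where "(g ^^ k) x = y \<or> (g ^^ k) y = x" unfolding gorb_def by blast
    then show "y \<in> gorb g (g x)"
    proof
      assume h: "(g ^^ k) x = y"
      show ?thesis
      proof (cases k)
        case 0 then have "(g ^^ 1) y = g x" using h by simp
        then show ?thesis unfolding gorb_def by blast
      next
        case (Suc k')
        then have "(g ^^ k') (g x) = y" using h by (simp add: funpow_swap1)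
        then show ?thesis unfolding gorb_def by blast
      qed
    next
      assume "(g ^^ k) y = x"
      then have "(g ^^ Suc k) y = g x" by simp
      then show ?thesis unfolding gorb_def by blast
    qed
  qed
qed

lemma PP_g: "PP i (g x) \<longleftrightarrow> PP i x"
  unfolding PP_def gorb_g g_Xn_iff ..

lemma PP_X: "PP i x \<Longrightarrow> x \<in> Xn n" unfolding PP_def by simp

lemma commute: "rmul (gpart n g i) g = rmul g (gpart n g i)"
  unfolding rmul_def
proof
  fix x show "(g \<circ> gpart n g i) x = (gpart n g i \<circ> g) x"
    by (cases "PP i x") (simp_all add: gpart_eq PP_g)
qed

lemma gp_bij: "bij_betw (gpart n g i) (Xn n) (Xn n)"
  unfolding bij_betw_def
proof
  show "inj_on (gpart n g i) (Xn n)"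
  proof (rule inj_onI)
    fix x y assume x: "x \<in> Xn n" and y: "y \<in> Xn n" and e: "gpart n g i x = gpart n g i y"
    show "x = y"
    proof (cases "PP i x"; cases "PP i y")
      assume "PP i x" "PP i y" then show ?thesis using e g_inj by (simp add: gpart_eq inj_eq)
    next
      assume a: "PP i x" "\<not> PP i y"
      then have "g x = y" using e by (simp add: gpart_eq)
      then show ?thesis using a PP_g by metis
    next
      assume a: "\<not> PP i x" "PP i y"
      then have "x = g y" using e by (simp add: gpart_eq)
      then show ?thesis using a PP_g by metis
    next
      assume "\<not> PP i x" "\<not> PP i y" then show ?thesis using e by (simp add: gpart_eq)
    qed
  qed
  show "gpart n g i ` Xn n = Xn n"
  proof
    show "gpart n g i ` Xn n \<subseteq> Xn n" using g_Xn_iff by (auto simp: gpart_eq)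
    show "Xn n \<subseteq> gpart n g i ` Xn n"
    proof
      fix y assume y: "y \<in> Xn n"
      show "y \<in> gpart n g i ` Xn n"
      proof (cases "PP i y")
        case True
        obtain x where x: "x \<in> Xn n" "g x = y" using y g_bij_Xn unfolding bij_betw_def by (metis imageE)
        then have "PP i x" using True PP_g by metis
        then have "gpart n g i x = y" using x by (simp add: gpart_eq)
        then show ?thesis using x by (metis imageI)
      next
        case False
        then have "gpart n g i y = y" by (simp add: gpart_eq)
        then show ?thesis using y by (metis imageI)
      qed
    qed
  qed
qed

definition tau :: "nat \<Rightarrow> nat \<Rightarrow> nat" where "tau i x = (if x \<in> Cg n g i then sg x else x)"

lemma sg_cls: "sg x \<in> cls n g x" using pow_cls[of 1 x] by simp

lemma tau_perm: "tau i permutes {1..n}"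
proof (rule bij_imp_permutes)
  have sub: "tau i ` {1..n} \<subseteq> {1..n}" unfolding tau_def using sg_in by auto
  have inj: "inj_on (tau i) {1..n}"
  proof (rule inj_onI)
    fix x y assume x: "x \<in> {1..n}" and y: "y \<in> {1..n}" and e: "tau i x = tau i y"
    have sx: "x \<in> Cg n g i \<Longrightarrow> sg x \<in> Cg n g i" using Cg_closed sg_cls by blast
    have sy: "y \<in> Cg n g i \<Longrightarrow> sg y \<in> Cg n g i" using Cg_closed sg_cls by blast
    show "x = y"
      using e sx sy permutes_inj[OF sg_perm] unfolding tau_def
      by (cases "x \<in> Cg n g i"; cases "y \<in> Cg n g i") (auto dest: injD)
  qed
  have "tau i ` {1..n} = {1..n}" by (rule endo_inj_surj[OF _ sub inj]) simp
  then show "bij_betw (tau i) {1..n} {1..n}" using inj unfolding bij_betw_def by simp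
  show "\<And>x. x \<notin> {1..n} \<Longrightarrow> tau i x = x" unfolding tau_def using Cg_sub by auto
qed

definition om :: "nat \<Rightarrow> perm" where "om i = (\<lambda>x. sact n (inv (tau i)) (gpart n g i x))"

lemma om_Hn: "om i \<in> Hn n"
proof -
  have tp: "tau i permutes {1..n}" by (rule tau_perm)
  have ip: "inv (tau i) permutes {1..n}" by (rule permutes_inv[OF tp])
  have b: "bij_betw (om i) (Xn n) (Xn n)"
  proof -
    have "bij_betw (sact n (inv (tau i)) \<circ> gpart n g i) (Xn n) (Xn n)"
      using bij_betw_trans[OF gp_bij sact_Xn[OF ip]] .
    then show ?thesis unfolding om_def by (simp add: comp_def)
  qed
  have o: "\<forall>x. x \<notin> Xn n \<longrightarrow> om i x = x"
  proof (intro allI impI)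
    fix x assume x: "x \<notin> Xn n"
    then have "\<not> PP i x" using PP_X by blast
    then show "om i x = x" unfolding om_def using x by (simp add: gpart_eq sact_out)
  qed
  have rows: "\<forall>r\<in>{1..n}. \<exists>z::nat. \<exists>tt::int. \<forall>m\<ge>z. fst (om i (r, m)) = r \<and> int (snd (om i (r, m))) = int m + tt"
  proof
    fix r assume r: "r \<in> {1..n}"
    define z where "z = Z + nat B"
    have zz: "m \<ge> z \<Longrightarrow> int m \<ge> int Z + B" for m unfolding z_def using B_nonneg by simp
    show "\<exists>z::nat. \<exists>tt::int. \<forall>m\<ge>z. fst (om i (r, m)) = r \<and> int (snd (om i (r, m))) = int m + tt"
    proof (cases "r \<in> Cg n g i")
      case True
      have "\<forall>m\<ge>z. fst (om i (r, m)) = r \<and> int (snd (om i (r, m))) = int m + t r"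
      proof (intro allI impI)
        fix m assume m: "m \<ge> z"
        have PP: "PP i (r,m)" using partB[OF True zz[OF m]] .
        have mZ: "m \<ge> Z" using m unfolding z_def by simp
        have gr: "g (r,m) = (sg r, nat (int m + t r))" and v1: "int m + t r \<ge> 1" using Zsh[OF r mZ] by auto
        have inX: "(sg r, nat (int m + t r)) \<in> Xn n" using sg_in[OF r] v1 by (simp add: Xn_iff)
        have "om i (r,m) = sact n (inv (tau i)) (sg r, nat (int m + t r))"
          unfolding om_def using PP gr by (simp add: gpart_eq)
        also have "\<dots> = (inv (tau i) (sg r), nat (int m + t r))" using sact_in[OF ip inX] by simp
        also have "inv (tau i) (sg r) = r"
        proof -
          have "tau i r = sg r" unfolding tau_def using True by simp
          then show ?thesis using permutes_inverses(2)[OF tp, of r] by simp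
        qed
        finally show "fst (om i (r, m)) = r \<and> int (snd (om i (r, m))) = int m + t r" using v1 by simp
      qed
      then show ?thesis by blast
    next
      case False
      have "\<forall>m\<ge>z. fst (om i (r, m)) = r \<and> int (snd (om i (r, m))) = int m + 0"
      proof (intro allI impI)
        fix m assume m: "m \<ge> z"
        have PP: "\<not> PP i (r,m)" using partA[OF r False zz[OF m]] .
        have m1: "m \<ge> 1" using m Z1 unfolding z_def by simp
        have inX: "(r, m) \<in> Xn n" using r m1 by (simp add: Xn_iff)
        have "om i (r,m) = sact n (inv (tau i)) (r, m)"
          unfolding om_def using PP by (simp add: gpart_eq)
        also have "\<dots> = (inv (tau i) r, m)" using sact_in[OF ip inX] by simp
        also have "inv (tau i) r = r"
        proof -
          have "tau i r = r" unfolding tau_def using False by simp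
          then show ?thesis using permutes_inverses(2)[OF tp, of r] by simp
        qed
        finally show "fst (om i (r, m)) = r \<and> int (snd (om i (r, m))) = int m + 0" by simp
      qed
      then show ?thesis by blast
    qed
  qed
  show ?thesis unfolding Hn_def using b o rows by blast
qed

lemma gpart_decomp: "gpart n g i = rmul (om i) (sact n (tau i))"
proof
  fix x
  have tp: "tau i permutes {1..n}" by (rule tau_perm)
  have ip: "inv (tau i) permutes {1..n}" by (rule permutes_inv[OF tp])
  have ii: "tau i \<circ> inv (tau i) = id" using permutes_inverses(1)[OF tp] by (simp add: fun_eq_iff)
  show "gpart n g i x = rmul (om i) (sact n (tau i)) x"
    unfolding rmul_def om_def by (simp add: sact_comp[OF tp ip] ii sact_id)
qed

lemma main: "gpart n g i \<in> HS n \<and> rmul (gpart n g i) g = rmul g (gpart n g i)"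
proof
  show "gpart n g i \<in> HS n" unfolding HS_def using gpart_decomp om_Hn tau_perm by blast
  show "rmul (gpart n g i) g = rmul g (gpart n g i)" by (rule commute)
qed

end

theorem lemma4p19:
  fixes n i :: nat and g :: perm
  assumes "n \<ge> 2" and "g \<in> HS n" and "i \<in> Ig n g"
  shows "gpart n g i \<in> HS n \<and> rmul (gpart n g i) g = rmul g (gpart n g i)"
proof -
  interpret hsg n g using assms(2) by unfold_locales
  obtain Z where Z: "Z \<ge> 1" "\<forall>r\<in>{1..n}. \<forall>m\<ge>Z. g (r,m) = (sig n g r, nat (int m + tt n g r)) \<and> int m + tt n g r \<ge> 1"
    using shift_ex by blast
  interpret hsg2 n g Z using Z by unfold_locales auto
  show ?thesis by (rule main)
qed


end
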